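(* Let $\mathbf P=UV^\top$ be an ergodic transition matrix on $\{1,\dots,p\}$ with stationary distribution $\pi$, where $U,V\in\mathbb R^{p\times r}$ are entrywise nonnegative with $U\mathbf 1_r=\mathbf 1_p$, $V^\top\mathbf 1_p=\mathbf 1_r$. Suppose there are constants $c_1,C_1,c_2>0$ with $c_1p^{-1}\le\pi_j\le C_1p^{-1}$ for all $j$, $\lambda_{\min}(U^\top[\mathrm{diag}(\pi)]^2U)\ge c_2p^{-1}r^{-1}$ and $\lambda_{\min}(V^\top[\mathrm{diag}(\pi)]^{-1}V)\ge c_2r$. Let $\mathbf Q=\mathrm{diag}(\pi)\mathbf P[\mathrm{diag}(\pi)]^{-1/2}$ have compact singular value decomposition $\mathbf Q=\mathbf G\Sigma\mathbf H^\top$ with $\mathbf G,\mathbf H\in\mathbb R^{p\times r}$ having orthonormal columns and $\Sigma\in\mathbb R^{r\times r}$ diagonal positive. Then for every $j=1,\dots,p$, $$\|\mathbf e_j^\top\mathbf G\|_2\le c_2^{-1/2}\pi_j\sqrt{pr},\qquad \|\mathbf e_j^\top\mathbf H\|_2\le C_1c_2^{-3/2}\sqrt{\pi_jr}.$$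
   Context: $\mathbf e_j$ denotes the $j$-th standard basis vector of $\mathbb R^p$. *)

theory Defs
  imports "HOL-Analysis.Analysis"
begin

primrec mpow :: "real^'n^'n \<Rightarrow> nat \<Rightarrow> real^'n^'n" where
  "mpow A 0 = mat 1"
| "mpow A (Suc k) = A ** mpow A k"

definition stochastic :: "real^'n^'n \<Rightarrow> bool" where
  "stochastic P \<longleftrightarrow> (\<forall>i j. P $ i $ j \<ge> 0) \<and> (\<forall>i. (\<Sum>j\<in>UNIV. P $ i $ j) = 1)"

definition irreducible_chain :: "real^'n^'n \<Rightarrow> bool" where
  "irreducible_chain P \<longleftrightarrow> (\<forall>i j. \<exists>k. mpow P k $ i $ j > 0)"

definition aperiodic_chain :: "real^'n^'n \<Rightarrow> bool" where
  "aperiodic_chain P \<longleftrightarrow> (\<forall>i. Gcd {k. k > 0 \<and> mpow P k $ i $ i > 0} = 1)"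

definition ergodic :: "real^'n^'n \<Rightarrow> bool" where
  "ergodic P \<longleftrightarrow> stochastic P \<and> irreducible_chain P \<and> aperiodic_chain P"

definition stationary_dist :: "real^'n^'n \<Rightarrow> real^'n \<Rightarrow> bool" where
  "stationary_dist P \<pi> \<longleftrightarrow> (\<forall>j. \<pi> $ j \<ge> 0) \<and> (\<Sum>j\<in>UNIV. \<pi> $ j) = 1 \<and> \<pi> v* P = \<pi>"

definition diag_mat :: "real^'n \<Rightarrow> real^'n^'n" where
  "diag_mat d = (\<chi> i j. if i = j then d $ i else 0)"

definition lambda_min :: "real^'n^'n \<Rightarrow> real" where
  "lambda_min A = Min {l. \<exists>v. v \<noteq> 0 \<and> A *v v = l *s v}"

end

theory Submission
  imports Defs
begin

lemma inner_sym_mat: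
  fixes M :: "real^'n^'n"
  assumes sym: "transpose M = M"
  shows "x \<bullet> (M *v y) = (M *v x) \<bullet> y"
proof -
  have "x \<bullet> (M *v y) = (x v* M) \<bullet> y" by (simp add: dot_lmul_matrix)
  also have "x v* M = transpose M *v x" by simp
  finally show ?thesis using sym by simp
qed

lemma inner_vscale_left: "((c::real) *s x) \<bullet> y = c * (x \<bullet> y)"
  by (simp add: inner_vec_def sum_distrib_left mult.assoc)
lemma inner_vscale_right: "x \<bullet> ((c::real) *s y) = c * (x \<bullet> y)"
  by (simp add: inner_vec_def sum_distrib_left mult.left_commute)

lemma mv_vscale: "(M::real^'n^'m) *v ((c::real) *s y) = c *s (M *v y)"
  by (simp add: vec_eq_iff matrix_vector_mult_def sum_distrib_left mult.left_commute)

lemma eig_finite: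
  fixes M :: "real^'n^'n"
  assumes sym: "transpose M = M"
  shows "finite {l. \<exists>v. v \<noteq> 0 \<and> M *v v = l *s v}"
proof -
  let ?E = "{l. \<exists>v. v \<noteq> 0 \<and> M *v v = l *s v}"
  define w where "w l = (SOME v. v \<noteq> 0 \<and> M *v v = l *s v)" for l
  have w: "w l \<noteq> 0 \<and> M *v w l = l *s w l" if "l \<in> ?E" for l
  proof -
    from that have "\<exists>v. v \<noteq> 0 \<and> M *v v = l *s v" by simp
    then show ?thesis unfolding w_def by (rule someI_ex)
  qed
  have orth: "w l \<bullet> w m = 0" if "l \<in> ?E" "m \<in> ?E" "l \<noteq> m" for l m
  proof -
    have "l * (w l \<bullet> w m) = (M *v w l) \<bullet> w m" using w[OF that(1)] by (simp add: inner_vscale_left inner_vscale_right)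
    also have "\<dots> = w l \<bullet> (M *v w m)" using inner_sym_mat[OF sym] by simp
    also have "\<dots> = m * (w l \<bullet> w m)" using w[OF that(2)] by (simp add: inner_vscale_left inner_vscale_right)
    finally show ?thesis using that(3) by simp
  qed
  have inj: "inj_on w ?E"
  proof (rule inj_onI)
    fix l m assume a: "l \<in> ?E" "m \<in> ?E" "w l = w m"
    show "l = m"
    proof (rule ccontr)
      assume "l \<noteq> m"
      then have "w l \<bullet> w l = 0" using orth[OF a(1,2)] a(3) by simp
      then show False using w[OF a(1)] by simp
    qed
  qed
  have "finite ?E \<and> card ?E \<le> DIM(real^'n)"
  proof (rule finite_if_finite_subsets_card_bdd)
    fix F assume F: "F \<subseteq> ?E" "finite F"
    have "pairwise orthogonal (w ` F)"
      unfolding pairwise_def orthogonal_def using orth F(1) by blast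
    moreover have "0 \<notin> w ` F" using w F(1) by fastforce
    ultimately have "independent (w ` F)" by (rule pairwise_orthogonal_independent)
    then have "card (w ` F) \<le> DIM(real^'n)" using independent_bound by blast
    moreover have "card (w ` F) = card F" using card_image inj_on_subset[OF inj F(1)] by blast
    ultimately show "card F \<le> DIM(real^'n)" by simp
  qed
  then show ?thesis by simp
qed

lemma quad_nonneg_zero:
  fixes a b :: real
  assumes "\<And>t. 0 \<le> 2 * t * a + t^2 * b" "b \<ge> 0"
  shows "a = 0"
proof (rule ccontr)
  assume a: "a \<noteq> 0"
  define t where "t = - a / (b + 1)"
  have "0 \<le> 2 * t * a + t^2 * b" by (rule assms(1))
  also have "2 * t * a + t^2 * b = a^2 * (b - 2*(b+1)) / (b+1)^2"
  proof -
    have d: "b + 1 \<noteq> 0" using assms(2) by simp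
    show ?thesis unfolding t_def using d by (simp add: divide_simps power2_eq_square) (simp add: algebra_simps)
  qed
  also have "\<dots> < 0" using a assms(2)
    by (intro divide_neg_pos mult_pos_neg) auto
  finally show False by simp
qed

lemma rayleigh:
  fixes M :: "real^'n^'n"
  assumes sym: "transpose M = M"
  shows "lambda_min M * (x \<bullet> x) \<le> x \<bullet> (M *v x)"
proof -
  define f where "f x = x \<bullet> (M *v x)" for x :: "real^'n"
  have cont: "continuous_on (sphere 0 1) f"
    unfolding f_def by (intro continuous_intros linear_continuous_on bounded_linear_inner_left) (simp add: matrix_vector_mul_bounded_linear)
  have ne: "sphere (0::real^'n) 1 \<noteq> {}" by (simp add: sphere_def) (metis norm_axis_1)
  obtain x0 where x0: "x0 \<in> sphere 0 1" and min: "\<And>y. y \<in> sphere 0 1 \<Longrightarrow> f x0 \<le> f y"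
    using continuous_attains_inf[OF compact_sphere ne cont] by blast
  define \<mu> where "\<mu> = f x0"
  have fscale: "f (c *s y) = c^2 * f y" for c y
    unfolding f_def by (simp add: inner_vscale_left inner_vscale_right mv_vscale power2_eq_square)
  have ge: "\<mu> * (y \<bullet> y) \<le> f y" for y
  proof (cases "y = 0")
    case True then show ?thesis by (simp add: f_def)
  next
    case False
    define z where "z = (1 / norm y) *s y"
    have "z \<in> sphere 0 1" using False unfolding z_def by (simp add: scalar_mult_eq_scaleR)
    then have "\<mu> \<le> f z" using min \<mu>_def by simp
    also have "f z = f y / (norm y)^2" unfolding z_def fscale by (simp add: field_simps)
    finally show ?thesis using False by (simp add: field_simps power2_norm_eq_inner)
  qed
  define g where "g = M *v x0 - \<mu> *s x0"
  have x00: "x0 \<bullet> x0 = 1" using x0 by (simp add: power2_norm_eq_inner[symmetric])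
  have "g \<bullet> g = 0"
  proof -
    let ?b = "f g - \<mu> * (g \<bullet> g)"
    have "0 \<le> 2 * t * (g \<bullet> g) + t^2 * ?b" for t
    proof -
      have A: "\<mu> * ((x0 + t *s g) \<bullet> (x0 + t *s g)) \<le> f (x0 + t *s g)" by (rule ge)
      have B: "f (x0 + t *s g) = f x0 + t * (x0 \<bullet> (M *v g) + g \<bullet> (M *v x0)) + t^2 * f g"
        unfolding f_def by (simp add: matrix_vector_right_distrib inner_add_left inner_add_right
            inner_vscale_left inner_vscale_right mv_vscale power2_eq_square algebra_simps)
      have C: "(x0 + t *s g) \<bullet> (x0 + t *s g) = 1 + 2 * t * (x0 \<bullet> g) + t^2 * (g \<bullet> g)"
        using x00 by (simp add: inner_add_left inner_add_right inner_vscale_left inner_vscale_right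
            power2_eq_square algebra_simps inner_commute)
      have D: "x0 \<bullet> (M *v g) = (M *v x0) \<bullet> g" by (rule inner_sym_mat[OF sym])
      have E: "g \<bullet> (M *v x0) = (M *v x0) \<bullet> g" by (rule inner_commute)
      have F: "g \<bullet> g = (M *v x0) \<bullet> g - \<mu> * (x0 \<bullet> g)"
      proof -
        have "g \<bullet> g = (M *v x0 - \<mu> *s x0) \<bullet> g" by (subst (1) g_def) (rule refl)
        then show ?thesis by (simp add: inner_diff_left inner_vscale_left)
      qed
      define c where "c = (M *v x0) \<bullet> g"
      define d where "d = x0 \<bullet> g"
      define q where "q = g \<bullet> g"
      have A': "\<mu> * (1 + 2 * t * d + t^2 * q) \<le> \<mu> + t * (2 * c) + t^2 * f g"
        using A unfolding B C D E c_def[symmetric] d_def[symmetric] q_def[symmetric] \<mu>_def by simp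
      have F': "q = c - \<mu> * d" using F unfolding c_def d_def q_def .
      have "2 * t * q + t^2 * (f g - \<mu> * q) = (\<mu> + t * (2 * c) + t^2 * f g) - \<mu> * (1 + 2 * t * d + t^2 * q)"
        unfolding F' by (simp add: algebra_simps)
      then show ?thesis using A' unfolding q_def by simp
    qed
    moreover have "?b \<ge> 0" using ge[of g] by simp
    ultimately show ?thesis by (rule quad_nonneg_zero)
  qed
  then have eig: "M *v x0 = \<mu> *s x0" unfolding g_def by simp
  have "x0 \<noteq> 0" using x00 by auto
  with eig have "\<mu> \<in> {l. \<exists>v. v \<noteq> 0 \<and> M *v v = l *s v}" by blast
  then have "lambda_min M \<le> \<mu>" unfolding lambda_min_def using eig_finite[OF sym] by simp
  moreover have "x \<bullet> x \<ge> 0" by simp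
  ultimately have "lambda_min M * (x \<bullet> x) \<le> \<mu> * (x \<bullet> x)" by (rule mult_right_mono)
  also have "\<dots> \<le> x \<bullet> (M *v x)" using ge[of x] by (simp add: f_def)
  finally show ?thesis .
qed

lemma inv_bound:
  fixes A M :: "real^'r^'r"
  assumes AMA: "transpose A ** M ** A = mat 1" and ray: "\<And>y. m * (y \<bullet> y) \<le> y \<bullet> (M *v y)" and m: "m > 0"
  shows "norm (transpose A *v u) \<le> norm u / sqrt m"
proof -
  have Ax: "norm (A *v x) \<le> norm x / sqrt m" for x
  proof -
    have "m * ((A *v x) \<bullet> (A *v x)) \<le> (A *v x) \<bullet> (M *v (A *v x))" by (rule ray)
    also have "\<dots> = x \<bullet> (transpose A *v (M *v (A *v x)))"
      by (metis dot_lmul_matrix vector_transpose_matrix)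
    also have "\<dots> = x \<bullet> x" by (simp add: matrix_vector_mul_assoc matrix_mul_assoc AMA)
    finally have "m * (norm (A *v x))^2 \<le> (norm x)^2" by (simp add: power2_norm_eq_inner)
    then have "(sqrt m * norm (A *v x))^2 \<le> (norm x)^2" using m by (simp add: power_mult_distrib)
    then have "sqrt m * norm (A *v x) \<le> norm x" by (rule power2_le_imp_le) simp
    then show ?thesis using m by (simp add: field_simps)
  qed
  let ?z = "transpose A *v u"
  have "(norm ?z)^2 = u \<bullet> (A *v ?z)"
    by (simp add: power2_norm_eq_inner) (metis dot_lmul_matrix vector_transpose_matrix)
  also have "\<dots> \<le> norm u * norm (A *v ?z)" by (rule norm_cauchy_schwarz)
  also have "\<dots> \<le> norm u * (norm ?z / sqrt m)" by (rule mult_left_mono[OF Ax]) simp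
  finally have "norm ?z * norm ?z \<le> norm ?z * (norm u / sqrt m)" by (simp add: power2_eq_square field_simps)
  then show ?thesis
  proof (cases "norm ?z = 0")
    case False
    then have "norm ?z > 0" by simp
    with \<open>norm ?z * norm ?z \<le> norm ?z * (norm u / sqrt m)\<close> show ?thesis
      by (rule mult_left_le_imp_le)
  qed (use m in simp)
qed

lemma ifz1: "(if P then (a::real) else 0) * c = (if P then a * c else 0)" by simp
lemma ifz2: "c * (if P then (a::real) else 0) = (if P then c * a else 0)" by simp
lemmas ifz = ifz1 ifz2
lemma row_axis: "axis j 1 v* (G::real^'r^'p) = G $ j"
  by (simp add: vec_eq_iff vector_matrix_mult_def axis_def ifz)
lemma row_diag: "(diag_mat d ** (X::real^'n^'m)) $ j = (d $ j) *s X $ j"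
  by (simp add: vec_eq_iff diag_mat_def matrix_matrix_mult_def ifz)
lemma diag_diag: "diag_mat a ** diag_mat b = diag_mat (\<chi> i. a $ i * b $ i)"
  by (simp add: vec_eq_iff diag_mat_def matrix_matrix_mult_def ifz)
lemma axis_quad: "axis k 1 \<bullet> ((M::real^'n^'n) *v axis k 1) = M $ k $ k"
  by (simp add: inner_vec_def matrix_vector_mult_def axis_def ifz)
lemma quad_entry: "(transpose X ** diag_mat d ** (X::real^'n^'m)) $ k $ l = (\<Sum>i\<in>UNIV. X$i$k * d$i * X$i$l)"
  by (simp add: matrix_matrix_mult_def diag_mat_def transpose_def ifz)
lemma transpose_diag: "transpose (diag_mat d) = diag_mat d"
  by (simp add: vec_eq_iff diag_mat_def transpose_def)

lemma diag_one: "diag_mat (\<chi> i. 1) = mat 1"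
  by (simp add: vec_eq_iff diag_mat_def mat_def)

lemma row_mult: "((X::real^'n^'m) ** Y) $ j = X $ j v* Y"
  by (simp add: vec_eq_iff vector_matrix_mult_def matrix_matrix_mult_def)

lemma vm_vscale: "((c::real) *s x) v* (A::real^'n^'m) = c *s (x v* A)"
  by (simp add: vec_eq_iff vector_matrix_mult_def sum_distrib_left mult.assoc)

lemma norm_vscale: "norm ((c::real) *s (x::real^'n)) = \<bar>c\<bar> * norm x"
  by (simp add: scalar_mult_eq_scaleR)

theorem mainTheorem7:
  fixes U V :: "real^'r^'p" and \<pi> :: "real^'p"
    and G H :: "real^'r^'p" and \<Sigma> :: "real^'r^'r"
    and c1 C1 c2 :: real
  assumes U_nonneg: "\<forall>i k. U $ i $ k \<ge> 0"
    and V_nonneg: "\<forall>i k. V $ i $ k \<ge> 0"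
    and U_rows: "U *v (\<chi> k. 1) = (\<chi> i. 1)"
    and V_cols: "transpose V *v (\<chi> i. 1) = (\<chi> k. 1)"
    and erg: "ergodic (U ** transpose V)"
    and stat: "stationary_dist (U ** transpose V) \<pi>"
    and c1_pos: "c1 > 0" and C1_pos: "C1 > 0" and c2_pos: "c2 > 0"
    and pi_bounds: "\<forall>j. c1 / real CARD('p) \<le> \<pi> $ j \<and> \<pi> $ j \<le> C1 / real CARD('p)"
    and eigU: "lambda_min (transpose U ** (diag_mat \<pi> ** diag_mat \<pi>) ** U)
                 \<ge> c2 / (real CARD('p) * real CARD('r))"
    and eigV: "lambda_min (transpose V ** diag_mat (\<chi> j. inverse (\<pi> $ j)) ** V)
                 \<ge> c2 * real CARD('r)"
    and G_orth: "transpose G ** G = mat 1"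
    and H_orth: "transpose H ** H = mat 1"
    and Sigma_diag: "\<forall>k l. k \<noteq> l \<longrightarrow> \<Sigma> $ k $ l = 0"
    and Sigma_pos: "\<forall>k. \<Sigma> $ k $ k > 0"
    and svd: "diag_mat \<pi> ** (U ** transpose V) ** diag_mat (\<chi> j. inverse (sqrt (\<pi> $ j)))
              = G ** \<Sigma> ** transpose H"
  shows "\<forall>j. norm (axis j 1 v* G) \<le> c2 powr (-1/2) * \<pi> $ j * sqrt (real CARD('p) * real CARD('r))
           \<and> norm (axis j 1 v* H) \<le> C1 * c2 powr (-3/2) * sqrt (\<pi> $ j * real CARD('r))"
proof -
  let ?p = "real CARD('p)" and ?r = "real CARD('r)"
  have p0: "?p > 0" and r0: "?r > 0" by simp_all
  have pi_pos: "\<pi> $ j > 0" for j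
  proof -
    have "c1 / ?p > 0" using c1_pos p0 by simp
    then show ?thesis using pi_bounds by (meson less_le_trans)
  qed
  have pi_le: "\<pi> $ j \<le> C1 / ?p" for j using pi_bounds by blast
  define D where "D = diag_mat \<pi>"
  define Dh where "Dh = diag_mat (\<chi> j. inverse (sqrt (\<pi> $ j)))"
  define Di where "Di = diag_mat (\<chi> j. inverse (\<pi> $ j))"
  define Q where "Q = D ** (U ** transpose V) ** Dh"
  have svd': "Q = G ** \<Sigma> ** transpose H" using svd unfolding Q_def D_def Dh_def .
  define Si where "Si = diag_mat (\<chi> k. inverse (\<Sigma> $ k $ k))"
  have Sd: "\<Sigma> = diag_mat (\<chi> k. \<Sigma> $ k $ k)"
    using Sigma_diag by (auto simp: vec_eq_iff diag_mat_def)
  have SSi: "\<Sigma> ** Si = mat 1"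
  proof -
    have "\<Sigma> ** Si = diag_mat (\<chi> k. \<Sigma> $ k $ k * inverse (\<Sigma> $ k $ k))"
      unfolding Si_def by (subst Sd) (simp add: diag_diag)
    also have "\<dots> = diag_mat (\<chi> k. 1)" using Sigma_pos by (simp add: less_imp_neq[symmetric])
    finally show ?thesis by (simp add: diag_one)
  qed
  have ST: "transpose \<Sigma> = \<Sigma>" by (subst (1 2) Sd) (rule transpose_diag)
  have DhDh: "Dh ** Dh = Di"
  proof -
    have "\<And>j. inverse (sqrt (\<pi> $ j)) * inverse (sqrt (\<pi> $ j)) = inverse (\<pi> $ j)"
      using pi_pos by (simp add: less_imp_le flip: inverse_mult_distrib)
    then show ?thesis unfolding Dh_def Di_def by (simp add: diag_diag)
  qed
  define A where "A = transpose V ** Dh ** H ** Si"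
  have QH: "Q ** H = G ** \<Sigma>"
  proof -
    have "Q ** H = (G ** \<Sigma>) ** (transpose H ** H)" by (simp add: svd' matrix_mul_assoc)
    then show ?thesis by (simp add: H_orth)
  qed
  have GA: "G = D ** U ** A"
  proof -
    have "G = G ** \<Sigma> ** Si" by (simp add: matrix_mul_assoc[symmetric] SSi)
    also have "\<dots> = Q ** H ** Si" using QH by simp
    also have "\<dots> = D ** U ** A" unfolding Q_def A_def by (simp add: matrix_mul_assoc)
    finally show ?thesis .
  qed
  define MU where "MU = transpose U ** (diag_mat \<pi> ** diag_mat \<pi>) ** U"
  have AMA: "transpose A ** MU ** A = mat 1"
  proof -
    have "transpose A ** MU ** A = transpose G ** G"
      unfolding GA MU_def D_def by (simp add: matrix_transpose_mul transpose_diag matrix_mul_assoc)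
    then show ?thesis using G_orth by simp
  qed
  have MU_sym: "transpose MU = MU"
    unfolding MU_def by (simp add: matrix_transpose_mul transpose_diag matrix_mul_assoc)
  define m1 where "m1 = c2 / (?p * ?r)"
  have m1_pos: "m1 > 0" unfolding m1_def using c2_pos by simp
  have rayU: "m1 * (y \<bullet> y) \<le> y \<bullet> (MU *v y)" for y
  proof -
    have "m1 * (y \<bullet> y) \<le> lambda_min MU * (y \<bullet> y)"
      using eigU unfolding m1_def MU_def by (intro mult_right_mono) simp_all
    also have "\<dots> \<le> y \<bullet> (MU *v y)" by (rule rayleigh[OF MU_sym])
    finally show ?thesis .
  qed
  define B where "B = transpose U ** D ** G ** Si"
  have QtG: "transpose Q ** G = H ** \<Sigma>"
  proof -
    have "transpose Q = H ** \<Sigma> ** transpose G"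
      unfolding svd' by (simp add: matrix_transpose_mul ST matrix_mul_assoc)
    then have "transpose Q ** G = (H ** \<Sigma>) ** (transpose G ** G)" by (simp add: matrix_mul_assoc)
    then show ?thesis by (simp add: G_orth)
  qed
  have HB: "H = Dh ** V ** B"
  proof -
    have "H = H ** \<Sigma> ** Si" by (simp add: matrix_mul_assoc[symmetric] SSi)
    also have "\<dots> = transpose Q ** G ** Si" using QtG by simp
    also have "\<dots> = Dh ** V ** B" unfolding Q_def B_def D_def Dh_def
      by (simp add: matrix_transpose_mul transpose_diag matrix_mul_assoc)
    finally show ?thesis .
  qed
  define MV where "MV = transpose V ** diag_mat (\<chi> j. inverse (\<pi> $ j)) ** V"
  have BMB: "transpose B ** MV ** B = mat 1"
  proof -
    have "transpose B ** MV ** B = transpose H ** H"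
      unfolding HB MV_def Di_def[symmetric] DhDh[symmetric]
      by (simp add: matrix_transpose_mul transpose_diag matrix_mul_assoc Dh_def)
    then show ?thesis using H_orth by simp
  qed
  have MV_sym: "transpose MV = MV"
    unfolding MV_def by (simp add: matrix_transpose_mul transpose_diag matrix_mul_assoc)
  define m2 where "m2 = c2 * ?r"
  have m2_pos: "m2 > 0" unfolding m2_def using c2_pos by simp
  have rayV: "m2 * (y \<bullet> y) \<le> y \<bullet> (MV *v y)" for y
  proof -
    have "m2 * (y \<bullet> y) \<le> lambda_min MV * (y \<bullet> y)"
      using eigV unfolding m2_def MV_def by (intro mult_right_mono) simp_all
    also have "\<dots> \<le> y \<bullet> (MV *v y)" by (rule rayleigh[OF MV_sym])
    finally show ?thesis .
  qed
  have Urow: "(\<Sum>k\<in>UNIV. U $ i $ k) = 1" for i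
  proof -
    have "(U *v (\<chi> k. 1)) $ i = 1" using U_rows by simp
    then show ?thesis by (simp add: matrix_vector_mult_def)
  qed
  have Ule1: "U $ i $ k \<le> 1" for i k
    using member_le_sum[of k UNIV "\<lambda>k. U $ i $ k"] U_nonneg Urow[of i] by simp
  have normU: "norm (U $ i) \<le> 1" for i
    using norm_le_l1_cart[of "U $ i"] U_nonneg Urow[of i] by simp
  define w where "w = \<pi> v* U"
  have w_eq: "w $ k = (\<Sum>i\<in>UNIV. \<pi> $ i * U $ i $ k)" for k
    unfolding w_def by (simp add: vector_matrix_mult_def)
  have w_lb: "c2 / (C1 * ?r) \<le> w $ k" for k
  proof -
    have "m1 = m1 * (axis k 1 \<bullet> axis k (1::real))" by (simp add: inner_axis_axis)
    also have "\<dots> \<le> axis k 1 \<bullet> (MU *v axis k 1)" by (rule rayU)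
    also have "\<dots> = MU $ k $ k" by (rule axis_quad)
    also have "\<dots> = (\<Sum>i\<in>UNIV. U $ i $ k * (\<pi> $ i * \<pi> $ i) * U $ i $ k)"
      unfolding MU_def diag_diag quad_entry by simp
    also have "\<dots> \<le> (\<Sum>i\<in>UNIV. (C1 / ?p) * (\<pi> $ i * U $ i $ k))"
    proof (rule sum_mono)
      fix i
      have a: "0 \<le> \<pi> $ i * U $ i $ k" using pi_pos[of i] U_nonneg by simp
      have "\<pi> $ i * U $ i $ k \<le> \<pi> $ i * 1" using pi_pos[of i] Ule1[of i k] by (intro mult_left_mono) auto
      also have "\<dots> \<le> C1 / ?p" using pi_le by simp
      finally have b: "\<pi> $ i * U $ i $ k \<le> C1 / ?p" .
      have "U $ i $ k * (\<pi> $ i * \<pi> $ i) * U $ i $ k = (\<pi> $ i * U $ i $ k) * (\<pi> $ i * U $ i $ k)"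
        by (simp add: algebra_simps)
      also have "\<dots> \<le> (C1 / ?p) * (\<pi> $ i * U $ i $ k)" using a b by (intro mult_right_mono) auto
      finally show "U $ i $ k * (\<pi> $ i * \<pi> $ i) * U $ i $ k \<le> (C1 / ?p) * (\<pi> $ i * U $ i $ k)" .
    qed
    also have "\<dots> = (C1 / ?p) * w $ k" by (simp add: w_eq sum_distrib_left)
    finally have "c2 / (?p * ?r) \<le> (C1 / ?p) * w $ k" unfolding m1_def .
    then show ?thesis using p0 r0 C1_pos by (simp add: field_simps)
  qed
  have pi_eq: "\<pi> $ j = (\<Sum>k\<in>UNIV. w $ k * V $ j $ k)" for j
  proof -
    have "\<pi> v* (U ** transpose V) = \<pi>" using stat unfolding stationary_dist_def by blast
    moreover have "w v* transpose V = \<pi> v* (U ** transpose V)" unfolding w_def by (rule vector_matrix_mul_assoc)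
    ultimately have "\<pi> $ j = (w v* transpose V) $ j" by simp
    then show ?thesis unfolding vector_matrix_mult_def transpose_def by simp
  qed
  have Vsum: "(\<Sum>k\<in>UNIV. V $ j $ k) \<le> C1 * ?r * \<pi> $ j / c2" for j
  proof -
    have "(c2 / (C1 * ?r)) * (\<Sum>k\<in>UNIV. V $ j $ k) = (\<Sum>k\<in>UNIV. (c2 / (C1 * ?r)) * V $ j $ k)"
      by (simp add: sum_distrib_left)
    also have "\<dots> \<le> (\<Sum>k\<in>UNIV. w $ k * V $ j $ k)"
      using w_lb V_nonneg by (intro sum_mono mult_right_mono) auto
    also have "\<dots> = \<pi> $ j" by (rule pi_eq[symmetric])
    finally show ?thesis using C1_pos r0 c2_pos by (simp add: field_simps)
  qed
  have normV: "norm (V $ j) \<le> C1 * ?r * \<pi> $ j / c2" for j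
    using norm_le_l1_cart[of "V $ j"] V_nonneg Vsum[of j] by simp
  have sc2: "sqrt c2 > 0" using c2_pos by simp
  show ?thesis
  proof (intro allI conjI)
    fix j
    have "norm (axis j 1 v* G) = norm ((D ** U ** A) $ j)" by (simp add: row_axis GA[symmetric])
    also have "(D ** U ** A) $ j = (D ** U) $ j v* A" by (rule row_mult)
    also have "norm ((D ** U) $ j v* A) = \<pi> $ j * norm (transpose A *v U $ j)"
      unfolding D_def row_diag vm_vscale norm_vscale using pi_pos[of j] by simp
    also have "\<dots> \<le> \<pi> $ j * (norm (U $ j) / sqrt m1)"
      using pi_pos[of j] inv_bound[OF AMA rayU m1_pos] by (intro mult_left_mono) auto
    also have "\<dots> \<le> \<pi> $ j * (1 / sqrt m1)"
      using pi_pos[of j] normU[of j] m1_pos by (intro mult_left_mono divide_right_mono) auto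
    also have "\<dots> = c2 powr (-1/2) * \<pi> $ j * sqrt (?p * ?r)"
    proof -
      have "c2 powr (-1/2) = 1 / sqrt c2" using c2_pos
        by (simp add: powr_minus_divide powr_half_sqrt)
      then show ?thesis unfolding m1_def using sc2 by (simp add: real_sqrt_divide field_simps)
    qed
    finally show "norm (axis j 1 v* G) \<le> c2 powr (-1/2) * \<pi> $ j * sqrt (?p * ?r)" .
  next
    fix j
    have "norm (axis j 1 v* H) = norm ((Dh ** V ** B) $ j)" by (simp add: row_axis HB[symmetric])
    also have "(Dh ** V ** B) $ j = (Dh ** V) $ j v* B" by (rule row_mult)
    also have "norm ((Dh ** V) $ j v* B) = inverse (sqrt (\<pi> $ j)) * norm (transpose B *v V $ j)"
      unfolding Dh_def row_diag vm_vscale norm_vscale using pi_pos[of j] by simp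
    also have "\<dots> \<le> inverse (sqrt (\<pi> $ j)) * (norm (V $ j) / sqrt m2)"
      using pi_pos[of j] inv_bound[OF BMB rayV m2_pos] by (intro mult_left_mono) auto
    also have "\<dots> \<le> inverse (sqrt (\<pi> $ j)) * ((C1 * ?r * \<pi> $ j / c2) / sqrt m2)"
      using pi_pos[of j] normV[of j] m2_pos by (intro mult_left_mono divide_right_mono) auto
    also have "\<dots> = C1 * c2 powr (-3/2) * sqrt (\<pi> $ j * ?r)"
    proof -
      have "c2 powr (3/2) = c2 * sqrt c2"
      proof -
        have "c2 powr (3/2) = c2 powr (1 + 1/2)" by simp
        also have "\<dots> = c2 powr 1 * c2 powr (1/2)" by (rule powr_add)
        also have "\<dots> = c2 * sqrt c2" using c2_pos by (simp add: powr_half_sqrt)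
        finally show ?thesis .
      qed
      then have e: "c2 powr (-3/2) = 1 / (c2 * sqrt c2)" using c2_pos
        by (simp add: powr_minus_divide)
      have sp: "sqrt (\<pi> $ j) > 0" using pi_pos[of j] by simp
      have "\<pi> $ j = sqrt (\<pi> $ j) * sqrt (\<pi> $ j)" using pi_pos[of j] by simp
      moreover have "?r = sqrt ?r * sqrt ?r" by simp
      ultimately show ?thesis unfolding m2_def e using sc2 sp c2_pos r0
        by (simp add: real_sqrt_mult field_simps)
    qed
    finally show "norm (axis j 1 v* H) \<le> C1 * c2 powr (-3/2) * sqrt (\<pi> $ j * ?r)" .
  qed
qed

end
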